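(* Let $G=(V,E,\omega)$ be the unweighted star graph on $n\geq3$ nodes. Then $G\in\mathcal C$.
   Context: The unweighted star graph on $n$ nodes has $V=\{1,\dots,n\}$, $\omega_{1j}=\omega_{j1}=1$ for $j\in\{2,\dots,n\}$ and all other $\omega_{ij}=0$. $d_i=\sum_j\omega_{ij}$. Fixed $r\in[0,1]$: for $u:V\to\mathbb R$, $(\Delta u)_i=d_i^{-r}\sum_j\omega_{ij}(u_i-u_j)$, $\mathcal M(u)=\sum_id_i^ru_i$, $\mathrm{vol}(V)=\sum_id_i^r$, $\mathcal A(u)=\frac{\mathcal M(u)}{\mathrm{vol}(V)}\chi_V$. Equilibrium measure $\nu^S$ ($S\subsetneq V$): the unique $\nu$ with $(\Delta\nu)_i=1$ on $S$ and $\nu=0$ off $S$. $f^j:=\nu^{V\setminus\{j\}}-\mathcal A(\nu^{V\setminus\{j\}})$. $\mathcal C$ is the set of finite, simple, connected, undirected, positively edge-weighted graphs (with at least two nodes) such that $f^j_i\geq0$ for all $j\in V$ and all $i\in V\setminus\{j\}$. *)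

theory Defs
  imports Complex_Main
begin

text \<open>A weighted graph is given by a vertex set V and a weight function w;
  w i j > 0 iff {i,j} is an edge.\<close>

definition is_graph :: "'a set \<Rightarrow> ('a \<Rightarrow> 'a \<Rightarrow> real) \<Rightarrow> bool" where
  "is_graph V w \<longleftrightarrow> finite V \<and> card V \<ge> 2
     \<and> (\<forall>i j. w i j = w j i)
     \<and> (\<forall>i j. w i j \<ge> 0)
     \<and> (\<forall>i. w i i = 0)
     \<and> (\<forall>i j. (i \<notin> V \<or> j \<notin> V) \<longrightarrow> w i j = 0)
     \<and> (\<forall>i\<in>V. \<forall>j\<in>V. (i, j) \<in> {(a, b). a \<in> V \<and> b \<in> V \<and> w a b > 0}\<^sup>*)"

definition deg :: "'a set \<Rightarrow> ('a \<Rightarrow> 'a \<Rightarrow> real) \<Rightarrow> 'a \<Rightarrow> real" where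
  "deg V w i = (\<Sum>j\<in>V. w i j)"

definition glap :: "real \<Rightarrow> 'a set \<Rightarrow> ('a \<Rightarrow> 'a \<Rightarrow> real) \<Rightarrow> ('a \<Rightarrow> real) \<Rightarrow> 'a \<Rightarrow> real" where
  "glap r V w u i = (deg V w i) powr (- r) * (\<Sum>j\<in>V. w i j * (u i - u j))"

definition gmass :: "real \<Rightarrow> 'a set \<Rightarrow> ('a \<Rightarrow> 'a \<Rightarrow> real) \<Rightarrow> ('a \<Rightarrow> real) \<Rightarrow> real" where
  "gmass r V w u = (\<Sum>i\<in>V. (deg V w i) powr r * u i)"

definition gvol :: "real \<Rightarrow> 'a set \<Rightarrow> ('a \<Rightarrow> 'a \<Rightarrow> real) \<Rightarrow> real" where
  "gvol r V w = (\<Sum>i\<in>V. (deg V w i) powr r)"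

definition gavg :: "real \<Rightarrow> 'a set \<Rightarrow> ('a \<Rightarrow> 'a \<Rightarrow> real) \<Rightarrow> ('a \<Rightarrow> real) \<Rightarrow> 'a \<Rightarrow> real" where
  "gavg r V w u = (\<lambda>i. if i \<in> V then gmass r V w u / gvol r V w else 0)"

definition eqmeas :: "real \<Rightarrow> 'a set \<Rightarrow> ('a \<Rightarrow> 'a \<Rightarrow> real) \<Rightarrow> 'a set \<Rightarrow> 'a \<Rightarrow> real" where
  "eqmeas r V w S = (THE \<nu>. (\<forall>i\<in>S. glap r V w \<nu> i = 1) \<and> (\<forall>i. i \<notin> S \<longrightarrow> \<nu> i = 0))"

definition fj :: "real \<Rightarrow> 'a set \<Rightarrow> ('a \<Rightarrow> 'a \<Rightarrow> real) \<Rightarrow> 'a \<Rightarrow> 'a \<Rightarrow> real" where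
  "fj r V w j = (\<lambda>i. eqmeas r V w (V - {j}) i - gavg r V w (eqmeas r V w (V - {j})) i)"

definition in_class_C :: "real \<Rightarrow> 'a set \<Rightarrow> ('a \<Rightarrow> 'a \<Rightarrow> real) \<Rightarrow> bool" where
  "in_class_C r V w \<longleftrightarrow> is_graph V w \<and>
     (\<forall>j\<in>V. \<forall>i\<in>V - {j}. fj r V w j i \<ge> 0)"

definition star_w :: "nat \<Rightarrow> nat \<Rightarrow> nat \<Rightarrow> real" where
  "star_w n i j = (if (i = 1 \<and> j \<in> {2..n}) \<or> (j = 1 \<and> i \<in> {2..n}) then 1 else 0)"

end

theory Submission
  imports Defs
begin

lemma star_leaf: "i \<in> {2..n} \<Longrightarrow> j \<in> {1..n} \<Longrightarrow> star_w n i j = (if j = 1 then 1 else 0)"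
  by (auto simp: star_w_def)

lemma star_center: "star_w n 1 j = (if j \<in> {2..n} then 1 else 0)"
  by (auto simp: star_w_def)

lemma sum_leaf:
  assumes "i \<in> {2..n}"
  shows "(\<Sum>j\<in>{1..n}. star_w n i j * g j) = g 1"
proof -
  have "(\<Sum>j\<in>{1..n}. star_w n i j * g j) = (\<Sum>j\<in>{1..n}. if j = 1 then g j else 0)"
    by (rule sum.cong) (auto simp: star_leaf[OF assms])
  also have "\<dots> = g 1" using assms by (simp add: sum.delta)
  finally show ?thesis .
qed

lemma sum_center: "(\<Sum>j\<in>{1..n}. star_w n 1 j * g j) = (\<Sum>j\<in>{2..n}. g j)"
proof -
  have "(\<Sum>j\<in>{1..n}. star_w n 1 j * g j) = (\<Sum>j\<in>{1..n}. if j \<in> {2..n} then g j else 0)"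
    by (rule sum.cong) (auto simp: star_w_def)
  also have "\<dots> = (\<Sum>j\<in>{2..n}. g j)"
    by (rule sum.mono_neutral_cong_right) auto
  finally show ?thesis .
qed

lemma deg_leaf: "i \<in> {2..n} \<Longrightarrow> deg {1..n} (star_w n) i = 1"
  using sum_leaf[of i n "\<lambda>_. 1"] by (simp add: deg_def)

lemma deg_center: "n \<ge> 1 \<Longrightarrow> deg {1..n} (star_w n) 1 = real n - 1"
  using sum_center[of n "\<lambda>_. 1"] by (simp add: deg_def of_nat_diff)

lemmas deg_leaf' = deg_leaf[simplified]

lemma glap_leaf: "i \<in> {2..n} \<Longrightarrow> glap r {1..n} (star_w n) u i = u i - u 1"
  unfolding glap_def deg_leaf sum_leaf by simp

lemma glap_center: "n \<ge> 1 \<Longrightarrow> glap r {1..n} (star_w n) u 1 = (real n - 1) powr (-r) * (\<Sum>j\<in>{2..n}. u 1 - u j)"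
  unfolding glap_def deg_center sum_center by simp

lemmas glap_leaf' = glap_leaf[simplified]

lemma V_split: "n \<ge> 1 \<Longrightarrow> {1..n} = insert 1 {2..(n::nat)}" by auto

lemma gmass_star: "n \<ge> 1 \<Longrightarrow> gmass r {1..n} (star_w n) u = (real n - 1) powr r * u 1 + (\<Sum>i\<in>{2..n}. u i)"
proof -
  assume n: "n \<ge> 1"
  have "gmass r {1..n} (star_w n) u = deg {1..n} (star_w n) 1 powr r * u 1
     + (\<Sum>i\<in>{2..n}. deg {1..n} (star_w n) i powr r * u i)"
    unfolding gmass_def V_split[OF n] by simp
  also have "(\<Sum>i\<in>{2..n}. deg {1..n} (star_w n) i powr r * u i) = (\<Sum>i\<in>{2..n}. u i)"
    by (rule sum.cong) (auto simp: deg_leaf deg_leaf')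
  finally show ?thesis unfolding deg_center[OF n] by simp
qed

lemma gvol_star: "n \<ge> 1 \<Longrightarrow> gvol r {1..n} (star_w n) = (real n - 1) powr r + (real n - 1)"
proof -
  assume n: "n \<ge> 1"
  have "gvol r {1..n} (star_w n) = deg {1..n} (star_w n) 1 powr r
     + (\<Sum>i\<in>{2..n}. deg {1..n} (star_w n) i powr r)"
    unfolding gvol_def V_split[OF n] by simp
  also have "(\<Sum>i\<in>{2..n}. deg {1..n} (star_w n) i powr r) = (\<Sum>i\<in>{2..n}. 1::real)"
    by (rule sum.cong) (auto simp: deg_leaf deg_leaf')
  finally show ?thesis unfolding deg_center[OF n] using n by (simp add: of_nat_diff)
qed

lemma graph_star: "n \<ge> 2 \<Longrightarrow> is_graph {1..n} (star_w n)"
proof -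
  assume n: "n \<ge> 2"
  let ?R = "{(a, b). a \<in> {1..n} \<and> b \<in> {1..n} \<and> star_w n a b > 0}"
  have to1: "(i, 1) \<in> ?R\<^sup>*" if "i \<in> {1..n}" for i
  proof (cases "i = 1")
    case False
    then have "(i, 1) \<in> ?R" using that n by (auto simp: star_w_def)
    then show ?thesis by blast
  qed simp
  have from1: "(1, i) \<in> ?R\<^sup>*" if "i \<in> {1..n}" for i
  proof (cases "i = 1")
    case False
    then have "(1, i) \<in> ?R" using that n by (auto simp: star_w_def)
    then show ?thesis by blast
  qed simp
  have "\<forall>i\<in>{1..n}. \<forall>j\<in>{1..n}. (i, j) \<in> ?R\<^sup>*"
    using to1 from1 by (meson rtrancl_trans)
  then show ?thesis using n unfolding is_graph_def by (auto simp: star_w_def)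
qed

lemma eq1:
  assumes n: "n \<ge> 2"
  shows "eqmeas r {1..n} (star_w n) ({1..n} - {1}) = (\<lambda>i. if i \<in> {2..n} then 1 else 0)"
proof -
  have S: "{1..n} - {1} = {2..n}" by auto
  show ?thesis unfolding eqmeas_def S
  proof (rule the_equality)
    show "(\<forall>i\<in>{2..n}. glap r {1..n} (star_w n) (\<lambda>i. if i \<in> {2..n} then 1 else 0) i = 1) \<and>
      (\<forall>i. i \<notin> {2..n} \<longrightarrow> (if i \<in> {2..n} then 1 else 0) = (0::real))"
      by (auto simp: glap_leaf glap_leaf')
  next
    fix \<nu> assume h: "(\<forall>i\<in>{2..n}. glap r {1..n} (star_w n) \<nu> i = 1) \<and> (\<forall>i. i \<notin> {2..n} \<longrightarrow> \<nu> i = 0)"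
    have "\<nu> 1 = 0" using h by auto
    then show "\<nu> = (\<lambda>i. if i \<in> {2..n} then 1 else 0)"
      using h by (auto simp: glap_leaf glap_leaf')
  qed
qed

lemma eqk:
  fixes r :: real
  assumes k: "k \<in> {2..n}"
  defines "a \<equiv> (real n - 1) powr r + real n - 2"
  shows "eqmeas r {1..n} (star_w n) ({1..n} - {k}) =
     (\<lambda>i. if i = 1 then a else if i \<in> {2..n} - {k} then a + 1 else 0)"
proof -
  have n: "n \<ge> 2" using k by auto
  have pos: "real n - 1 > 0" using n by simp
  have n1: "n \<ge> 1" using n by simp
  have pw: "(real n - 1) powr (-r) * (real n - 1) powr r = 1"
    using pos by (simp add: powr_add[symmetric])
  have cardk: "card ({2..n} - {k}) = n - 2" using k by simp
  have rn: "real (n - 2) = real n - 2" using n by (simp add: of_nat_diff)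
  have split: "(\<Sum>j\<in>{2..n}. f j) = f k + (\<Sum>j\<in>{2..n} - {k}. f j)" for f :: "nat \<Rightarrow> real"
    using k by (simp add: sum.remove)
  have S: "{1..n} - {k} = insert 1 ({2..n} - {k})" using k by auto
  let ?c = "\<lambda>i. if i = 1 then a else if i \<in> {2..n} - {k} then a + 1 else 0"
  show ?thesis unfolding eqmeas_def
  proof (rule the_equality)
    have c1: "glap r {1..n} (star_w n) ?c 1 = 1"
    proof -
      have "(\<Sum>j\<in>{2..n}. ?c 1 - ?c j) = a + (\<Sum>j\<in>{2..n} - {k}. - 1)"
        unfolding split using k by simp
      also have "\<dots> = (real n - 1) powr r" using cardk rn by (simp add: a_def)
      finally have "(\<Sum>j\<in>{2..n}. ?c 1 - ?c j) = (real n - 1) powr r" .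
      then show ?thesis unfolding glap_center[OF n1] using pw by (simp add: mult.commute)
    qed
    show "(\<forall>i\<in>{1..n} - {k}. glap r {1..n} (star_w n) ?c i = 1) \<and> (\<forall>i. i \<notin> {1..n} - {k} \<longrightarrow> ?c i = 0)"
      using c1 unfolding S by (auto simp: glap_leaf glap_leaf')
  next
    fix \<nu> assume h: "(\<forall>i\<in>{1..n} - {k}. glap r {1..n} (star_w n) \<nu> i = 1) \<and> (\<forall>i. i \<notin> {1..n} - {k} \<longrightarrow> \<nu> i = 0)"
    have nk: "\<nu> k = 0" using h by auto
    have leaf: "\<nu> i = \<nu> 1 + 1" if "i \<in> {2..n} - {k}" for i
      using h that glap_leaf[of i n r \<nu>] by auto
    have "glap r {1..n} (star_w n) \<nu> 1 = 1" using h n k by auto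
    then have e: "(real n - 1) powr (-r) * (\<Sum>j\<in>{2..n}. \<nu> 1 - \<nu> j) = 1" unfolding glap_center[OF n1] .
    have "(\<Sum>j\<in>{2..n}. \<nu> 1 - \<nu> j) = \<nu> 1 + (\<Sum>j\<in>{2..n} - {k}. - 1)"
      unfolding split using nk leaf by simp
    also have "\<dots> = \<nu> 1 - (real n - 2)" using cardk rn by simp
    finally have e2: "(real n - 1) powr (-r) * (\<nu> 1 - (real n - 2)) = 1" using e by simp
    have "\<nu> 1 - (real n - 2) = ((real n - 1) powr r * (real n - 1) powr (-r)) * (\<nu> 1 - (real n - 2))"
      using pw by (simp add: mult.commute)
    also have "\<dots> = (real n - 1) powr r" using e2 by (simp add: mult.assoc)
    finally have v1: "\<nu> 1 = a" by (simp add: a_def)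
    show "\<nu> = ?c"
    proof
      fix i show "\<nu> i = ?c i"
        using v1 leaf h by (cases "i = 1") auto
    qed
  qed
qed

theorem lemma6p4:
  fixes n :: nat and r :: real
  assumes "n \<ge> 3" and "0 \<le> r" and "r \<le> 1"
  shows "in_class_C r {1..n} (star_w n)"
proof -
  have n: "n \<ge> 2" "n \<ge> 1" using assms by auto
  define D where "D = (real n - 1) powr r"
  have D0: "D \<ge> 0" by (simp add: D_def)
  have vol: "gvol r {1..n} (star_w n) = D + (real n - 1)" using gvol_star[OF n(2)] by (simp add: D_def)
  have volpos: "D + (real n - 1) > 0" using D0 n by simp
  have "fj r {1..n} (star_w n) j i \<ge> 0" if j: "j \<in> {1..n}" and i: "i \<in> {1..n} - {j}" for i j
  proof (cases "j = 1")
    case True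
    let ?c = "\<lambda>i. if i \<in> {2..n} then 1 else 0::real"
    have m: "gmass r {1..n} (star_w n) ?c = real n - 1"
      using gmass_star[OF n(2), of r ?c] n by simp
    have "(real n - 1) / (D + (real n - 1)) \<le> 1" using volpos D0 by simp
    moreover have "i \<in> {2..n}" using i True by auto
    ultimately show ?thesis using True i
      unfolding True fj_def eq1[OF n(1)] gavg_def m vol by simp
  next
    case False
    then have k: "j \<in> {2..n}" using j by auto
    define a where "a = (real n - 1) powr r + real n - 2"
    let ?c = "\<lambda>i. if i = 1 then a else if i \<in> {2..n} - {j} then a + 1 else 0"
    have E: "eqmeas r {1..n} (star_w n) ({1..n} - {j}) = ?c" unfolding a_def by (rule eqk[OF k])
    have cardk: "card ({2..n} - {j}) = n - 2" using k by simp
    have rn: "real (n - 2) = real n - 2" using n by (simp add: of_nat_diff)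
    have "(\<Sum>i\<in>{2..n}. ?c i) = ?c j + (\<Sum>i\<in>{2..n} - {j}. ?c i)"
      using k by (simp add: sum.remove)
    also have "\<dots> = (\<Sum>i\<in>{2..n} - {j}. a + 1)" using False by simp
    also have "\<dots> = (real n - 2) * (a + 1)" using cardk rn by simp
    finally have s: "(\<Sum>i\<in>{2..n}. ?c i) = (real n - 2) * (a + 1)" .
    have m: "gmass r {1..n} (star_w n) ?c = D * a + (real n - 2) * (a + 1)"
      using gmass_star[OF n(2), of r ?c] s by (simp add: D_def)
    have ad: "a = D + real n - 2" by (simp add: a_def D_def)
    have "a * (D + (real n - 1)) - (D * a + (real n - 2) * (a + 1)) = D"
      unfolding ad by (simp add: algebra_simps)
    then have "D * a + (real n - 2) * (a + 1) \<le> a * (D + (real n - 1))" using D0 by linarith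
    then have avg: "(D * a + (real n - 2) * (a + 1)) / (D + (real n - 1)) \<le> a"
      using volpos by (simp add: divide_le_eq)
    have "?c i \<ge> a" using i by auto
    then show ?thesis using avg i
      unfolding fj_def E gavg_def m vol by simp
  qed
  then show ?thesis unfolding in_class_C_def using graph_star[OF n(1)] by auto
qed

end
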